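(* Let $\mathbf{u}$ be quasi-definite with SMOP $(P_n)$ and associated polynomials of the first kind $(P^{(1)}_n)$, let $c\in\mathbb{C}$ with $P_n(c)\ne0$ for all $n\ge0$, and let $\widetilde{\mathbf{u}}=(x-c)\mathbf{u}$ (which is then quasi-definite, with $\widetilde{\mathbf{u}}_0\neq0$), with SMOP $(\widetilde P_n)$ and associated polynomials of the first kind $(\widetilde P^{(1)}_n)$. Define $$R_n(x)=\frac{\mathbf{u}_0}{\widetilde{\mathbf{u}}_0}\Big[(x-c)P^{(1)}_n(x)-P_{n+1}(x)\Big],\quad n\ge-1 .$$ Then for every $n\ge1$, $$(x-c)\,\widetilde P^{(1)}_{n-1}(x)=R_n(x)-\frac{P_{n+1}(c)}{P_n(c)}\,R_{n-1}(x).$$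
   Context: Linear functionals on complex polynomials, moments $\mathbf{u}_n=\langle\mathbf{u},x^n\rangle$, $\langle(x-c)\mathbf{u},p\rangle=\langle\mathbf{u},(x-c)p\rangle$. Quasi-definite: all leading principal Hankel minors of the moments nonzero; a quasi-definite functional has a unique sequence of monic orthogonal polynomials (SMOP) $(P_n)$ with $xP_n=P_{n+1}+b_nP_n+a_nP_{n-1}$, $P_{-1}=0$, $P_0=1$, $a_n\neq0$. Associated polynomials of the first kind: monic, $xP^{(1)}_n=P^{(1)}_{n+1}+b_{n+1}P^{(1)}_n+a_{n+1}P^{(1)}_{n-1}$, $P^{(1)}_{-1}=0$, $P^{(1)}_0=1$; equivalently $P^{(1)}_{n-1}(x)=\frac{1}{\mathbf{u}_0}\langle\mathbf{u}_y,\frac{P_n(x)-P_n(y)}{x-y}\rangle$. The SMOP of $(x-c)\mathbf{u}$ is $\widetilde P_n(x)=\big(P_{n+1}(x)-\frac{P_{n+1}(c)}{P_n(c)}P_n(x)\big)/(x-c)$. *)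

theory Defs
  imports "HOL-Computational_Algebra.Polynomial" "Jordan_Normal_Form.Determinant"
begin

text \<open>A linear functional u on complex polynomials is represented by its moment
sequence m, with m n = <u, x^n>.\<close>

definition lin :: "(nat \<Rightarrow> complex) \<Rightarrow> complex poly \<Rightarrow> complex" where
  "lin m p = (\<Sum>i\<le>degree p. coeff p i * m i)"

text \<open>Moments of (x - c) u: <(x-c)u, x^n> = <u, x^(n+1)> - c <u, x^n>.\<close>
definition mult_shift :: "complex \<Rightarrow> (nat \<Rightarrow> complex) \<Rightarrow> nat \<Rightarrow> complex" where
  "mult_shift c m n = m (Suc n) - c * m n"

definition quasi_definite :: "(nat \<Rightarrow> complex) \<Rightarrow> bool" where
  "quasi_definite m \<longleftrightarrow> (\<forall>n\<ge>1. det (mat n n (\<lambda>(i,j). m (i + j))) \<noteq> 0)"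

definition is_SMOP :: "(nat \<Rightarrow> complex) \<Rightarrow> (nat \<Rightarrow> complex poly) \<Rightarrow> bool" where
  "is_SMOP m P \<longleftrightarrow> (\<forall>n. degree (P n) = n \<and> lead_coeff (P n) = 1 \<and>
      (\<forall>k<n. lin m (P n * monom 1 k) = 0) \<and> lin m (P n * monom 1 n) \<noteq> 0)"

text \<open>Associated polynomials of the first kind: assoc1 m P n = P^(1)_n, defined by
  P^(1)_n(x) = (1/u_0) <u_y, (P_(n+1)(x) - P_(n+1)(y))/(x-y)>, where
  (x^k - y^k)/(x-y) = sum_(j<k) x^j y^(k-1-j).\<close>
definition assoc1 :: "(nat \<Rightarrow> complex) \<Rightarrow> (nat \<Rightarrow> complex poly) \<Rightarrow> nat \<Rightarrow> complex poly" where
  "assoc1 m P n = smult (1 / m 0)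
     (\<Sum>k\<le>degree (P (Suc n)). \<Sum>j<k. monom (coeff (P (Suc n)) k * m (k - 1 - j)) j)"

definition R :: "(nat \<Rightarrow> complex) \<Rightarrow> complex \<Rightarrow> (nat \<Rightarrow> complex poly) \<Rightarrow> nat \<Rightarrow> complex poly" where
  "R m c P n = smult (m 0 / mult_shift c m 0) ([:-c, 1:] * assoc1 m P n - P (Suc n))"

end

theory Submission
  imports Defs
begin
lemma lin_bound: assumes "degree p \<le> N" shows "lin m p = (\<Sum>i\<le>N. coeff p i * m i)"
  unfolding lin_def
  by (rule sum.mono_neutral_left) (auto simp: coeff_eq_0 assms)

lemma lin_0[simp]: "lin m 0 = 0" by (simp add: lin_def)

lemma lin_add: "lin m (p + q) = lin m p + lin m q"
proof -
  define N where "N = max (max (degree p) (degree q)) (degree (p+q))"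
  have "lin m (p+q) = (\<Sum>i\<le>N. coeff (p+q) i * m i)" by (rule lin_bound) (simp add: N_def)
  moreover have "lin m p = (\<Sum>i\<le>N. coeff p i * m i)" by (rule lin_bound) (simp add: N_def)
  moreover have "lin m q = (\<Sum>i\<le>N. coeff q i * m i)" by (rule lin_bound) (simp add: N_def)
  ultimately show ?thesis by (simp add: sum.distrib distrib_right)
qed

lemma lin_smult: "lin m (smult a p) = a * lin m p"
proof -
  have "lin m (smult a p) = (\<Sum>i\<le>degree p. coeff (smult a p) i * m i)"
    by (rule lin_bound) (simp add: degree_smult_le)
  then show ?thesis by (simp add: lin_def sum_distrib_left mult.assoc)
qed

lemma lin_diff: "lin m (p - q) = lin m p - lin m q"
  using lin_add[of m "p - q" q] by simp

lemma lin_sum: "lin m (\<Sum>x\<in>A. f x) = (\<Sum>x\<in>A. lin m (f x))"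
  by (induction A rule: infinite_finite_induct) (auto simp: lin_add)

lemma lin_monom: "lin m (monom a k) = a * m k"
proof -
  have "lin m (monom a k) = (\<Sum>i\<le>k. coeff (monom a k) i * m i)"
    by (rule lin_bound) (simp add: degree_monom_le)
  also have "\<dots> = a * m k" by (subst sum.remove[of _ k]) auto
  finally show ?thesis .
qed

lemma lin_mult_lin: "[:-c, 1:] * (q::complex poly) = pCons 0 q - smult c q"
  by (simp add: poly_eq_iff coeff_pCons algebra_simps split: nat.split)

lemma lin_shift: "lin (mult_shift c m) p = lin m ([:-c,1:] * p)"
proof -
  have "lin (mult_shift c m) p = lin (mult_shift c m) (\<Sum>i\<le>degree p. monom (coeff p i) i)"
    by (simp add: poly_as_sum_of_monoms)
  also have "\<dots> = (\<Sum>i\<le>degree p. lin m ([:-c,1:] * monom (coeff p i) i))"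
    by (simp add: lin_sum lin_monom lin_mult_lin lin_diff lin_smult mult_shift_def monom_Suc[symmetric] algebra_simps
        )
  also have "\<dots> = lin m ([:-c,1:] * (\<Sum>i\<le>degree p. monom (coeff p i) i))"
    by (simp add: lin_sum sum_distrib_left)
  finally show ?thesis by (simp add: poly_as_sum_of_monoms)
qed

lemma smult_sum2: "smult a (\<Sum>i\<in>S. f i) = (\<Sum>i\<in>S. smult a (f i))"
  by (induction S rule: infinite_finite_induct) (auto simp: smult_add_right)

definition Dop :: "(nat \<Rightarrow> complex) \<Rightarrow> complex poly \<Rightarrow> complex poly" where
  "Dop m p = (\<Sum>k\<le>degree p. \<Sum>j<k. monom (coeff p k * m (k - 1 - j)) j)"

lemma Dop_bound: assumes "degree p \<le> N"
  shows "Dop m p = (\<Sum>k\<le>N. \<Sum>j<k. monom (coeff p k * m (k - 1 - j)) j)"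
  unfolding Dop_def
  by (rule sum.mono_neutral_left) (auto simp: coeff_eq_0 assms)

lemma Dop_0[simp]: "Dop m 0 = 0" by (simp add: Dop_def)

lemma Dop_add: "Dop m (p + q) = Dop m p + Dop m q"
proof -
  define N where "N = max (max (degree p) (degree q)) (degree (p+q))"
  have "Dop m (p+q) = (\<Sum>k\<le>N. \<Sum>j<k. monom (coeff (p+q) k * m (k - 1 - j)) j)"
    by (rule Dop_bound) (simp add: N_def)
  moreover have "Dop m p = (\<Sum>k\<le>N. \<Sum>j<k. monom (coeff p k * m (k - 1 - j)) j)"
    by (rule Dop_bound) (simp add: N_def)
  moreover have "Dop m q = (\<Sum>k\<le>N. \<Sum>j<k. monom (coeff q k * m (k - 1 - j)) j)"
    by (rule Dop_bound) (simp add: N_def)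
  ultimately show ?thesis by (simp add: sum.distrib[symmetric] distrib_right add_monom[symmetric])
qed

lemma Dop_smult: "Dop m (smult a p) = smult a (Dop m p)"
proof -
  have "Dop m (smult a p) = (\<Sum>k\<le>degree p. \<Sum>j<k. monom (coeff (smult a p) k * m (k - 1 - j)) j)"
    by (rule Dop_bound) (simp add: degree_smult_le)
  then show ?thesis by (simp add: Dop_def smult_sum2 smult_monom mult.assoc)
qed

lemma Dop_diff: "Dop m (p - q) = Dop m p - Dop m q"
  using Dop_add[of m "p - q" q] by simp

lemma Dop_sum: "Dop m (\<Sum>x\<in>A. f x) = (\<Sum>x\<in>A. Dop m (f x))"
  by (induction A rule: infinite_finite_induct) (auto simp: Dop_add)

lemma Dop_monom: "Dop m (monom a k) = (\<Sum>j<k. monom (a * m (k - 1 - j)) j)"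
proof -
  have "Dop m (monom a k) = (\<Sum>i\<le>k. \<Sum>j<i. monom (coeff (monom a k) i * m (i - 1 - j)) j)"
    by (rule Dop_bound) (simp add: degree_monom_le)
  also have "\<dots> = (\<Sum>j<k. monom (a * m (k - 1 - j)) j)" by (subst sum.remove[of _ k]) auto
  finally show ?thesis .
qed

lemma Dop_shift_monom:
  "Dop m ([:-c,1:] * monom a k) = smult (m 0) (monom a k) + Dop (mult_shift c m) (monom a k)"
proof -
  have "Dop m ([:-c,1:] * monom a k) = Dop m (monom a (Suc k)) - smult c (Dop m (monom a k))"
    by (simp add: lin_mult_lin Dop_diff Dop_smult monom_Suc[symmetric])
  also have "\<dots> = (\<Sum>j<k. monom (a * m (k - j)) j) + monom (a * m 0) k
      - (\<Sum>j<k. monom (c * (a * m (k - 1 - j))) j)"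
    by (simp add: Dop_monom smult_sum2 smult_monom)
  also have "\<dots> = monom (a * m 0) k + (\<Sum>j<k. monom (a * m (k - j)) j - monom (c * (a * m (k - 1 - j))) j)"
    by (simp add: sum_subtractf)
  also have "\<dots> = monom (a * m 0) k + (\<Sum>j<k. monom (a * mult_shift c m (k - 1 - j)) j)"
    by (intro arg_cong2[where f="(+)"] refl sum.cong) (auto simp: diff_monom mult_shift_def Suc_diff_Suc algebra_simps)
  finally show ?thesis by (simp add: Dop_monom smult_monom mult.commute)
qed

lemma Dop_shift: "Dop m ([:-c,1:] * p) = smult (m 0) p + Dop (mult_shift c m) p"
proof -
  have "Dop m ([:-c,1:] * p) = Dop m ([:-c,1:] * (\<Sum>i\<le>degree p. monom (coeff p i) i))"
    by (simp add: poly_as_sum_of_monoms)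
  also have "\<dots> = (\<Sum>i\<le>degree p. smult (m 0) (monom (coeff p i) i) + Dop (mult_shift c m) (monom (coeff p i) i))"
    unfolding sum_distrib_left Dop_sum Dop_shift_monom ..
  also have "\<dots> = smult (m 0) (\<Sum>i\<le>degree p. monom (coeff p i) i) + Dop (mult_shift c m) (\<Sum>i\<le>degree p. monom (coeff p i) i)"
    by (simp add: sum.distrib smult_sum2 Dop_sum)
  finally show ?thesis by (simp add: poly_as_sum_of_monoms)
qed

lemma ortho_poly:
  assumes "\<forall>k<n. lin w (S * monom 1 k) = 0" "\<forall>i\<ge>n. coeff q i = 0"
  shows "lin w (S * q) = 0"
proof -
  have "lin w (S * q) = lin w (S * (\<Sum>i\<le>degree q. monom (coeff q i) i))"
    by (simp add: poly_as_sum_of_monoms)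
  also have "\<dots> = (\<Sum>i\<le>degree q. coeff q i * lin w (S * monom 1 i))"
    unfolding sum_distrib_left lin_sum
    by (intro sum.cong refl) (metis lin_smult mult.commute mult.left_commute mult.right_neutral smult_monom mult_smult_right monom_eq_1_iff smult_one)
  also have "\<dots> = 0"
    by (intro sum.neutral ballI) (metis assms mult_eq_0_iff not_le)
  finally show ?thesis .
qed

lemma smop_unique:
  assumes sm: "is_SMOP w Pt" and dS: "degree S < n" and orth: "\<forall>k<n. lin w (S * monom 1 k) = 0"
  shows "S = 0"
proof (rule ccontr)
  assume "S \<noteq> 0"
  define d where "d = degree S"
  define s where "s = lead_coeff S"
  have s0: "s \<noteq> 0" using \<open>S \<noteq> 0\<close> by (simp add: s_def)
  have Pd: "degree (Pt d) = d" "lead_coeff (Pt d) = 1" "\<forall>k<d. lin w (Pt d * monom 1 k) = 0"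
    "lin w (Pt d * monom 1 d) \<noteq> 0"
    using sm unfolding is_SMOP_def by (auto, metis)
  have h1: "lin w (S * Pt d) = 0"
    by (rule ortho_poly[OF orth]) (use Pd dS d_def in \<open>auto intro: coeff_eq_0\<close>)
  define S' where "S' = S - smult s (Pt d)"
  have cS': "\<forall>i\<ge>d. coeff S' i = 0"
  proof (intro allI impI)
    fix i assume "d \<le> i"
    show "coeff S' i = 0"
    proof (cases "i = d")
      case True then show ?thesis using Pd by (simp add: S'_def s_def d_def)
    next
      case False then have "i > d" using \<open>d \<le> i\<close> by simp
      then show ?thesis using Pd by (simp add: S'_def coeff_eq_0 d_def)
    qed
  qed
  have h2: "lin w (Pt d * S') = 0" by (rule ortho_poly[OF Pd(3) cS'])
  define D' where "D' = Pt d - monom 1 d"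
  have cD': "\<forall>i\<ge>d. coeff D' i = 0"
  proof (intro allI impI)
    fix i assume "d \<le> i"
    show "coeff D' i = 0"
    proof (cases "i = d")
      case True then show ?thesis using Pd by (simp add: D'_def)
    next
      case False then have "i > d" using \<open>d \<le> i\<close> by simp
      then show ?thesis using Pd by (simp add: D'_def coeff_eq_0)
    qed
  qed
  have h3: "lin w (Pt d * D') = 0" by (rule ortho_poly[OF Pd(3) cD'])
  have "S = S' + smult s (Pt d)" by (simp add: S'_def)
  then have "S * Pt d = Pt d * S' + smult s (Pt d * Pt d)" by (simp add: algebra_simps)
  then have "lin w (S * Pt d) = lin w (Pt d * S') + s * lin w (Pt d * Pt d)"
    by (simp add: lin_add lin_smult)
  moreover have "Pt d * Pt d = Pt d * D' + Pt d * monom 1 d" by (simp add: D'_def algebra_simps)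
  ultimately have "lin w (S * Pt d) = lin w (Pt d * S') + s * (lin w (Pt d * D') + lin w (Pt d * monom 1 d))"
    by (simp add: lin_add)
  with h1 h2 h3 s0 Pd(4) show False by simp
qed

lemma alg1: fixes L D1 D0 P1 P0 :: "complex poly"
  shows "smult \<alpha> (L * smult \<beta> D1 - P1) - smult a (smult \<alpha> (L * smult \<beta> D0 - P0))
    = smult \<alpha> (L * smult \<beta> (D1 - smult a D0) - (P1 - smult a P0))"
  by (simp add: algebra_simps smult_diff_right smult_add_right mult_ac)

lemma alg2: fixes L T D :: "complex poly"
  assumes "\<beta> * m0 = 1"
  shows "smult \<alpha> (L * smult \<beta> (smult m0 T + D) - L * T) = smult (\<alpha> * \<beta>) (L * D)"
proof -
  have "L * smult \<beta> (smult m0 T + D) = smult (\<beta> * m0) (L * T) + smult \<beta> (L * D)"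
    by (simp add: smult_add_right distrib_left smult_smult)
  then show ?thesis by (simp add: assms)
qed

lemma assoc1_Dop: "assoc1 m P n = smult (1 / m 0) (Dop m (P (Suc n)))"
  by (simp add: assoc1_def Dop_def)

theorem mainTheorem9:
  fixes m :: "nat \<Rightarrow> complex" and P Pt :: "nat \<Rightarrow> complex poly"
    and c :: complex and n :: nat
  assumes "quasi_definite m"
    and "is_SMOP m P"
    and "\<forall>k. poly (P k) c \<noteq> 0"
    and "is_SMOP (mult_shift c m) Pt"
    and "n \<ge> 1"
  shows "[:-c, 1:] * assoc1 (mult_shift c m) Pt (n - 1)
           = R m c P n - smult (poly (P (Suc n)) c / poly (P n) c) (R m c P (n - 1))"
proof -
  define a where "a = poly (P (Suc n)) c / poly (P n) c"
  define Q where "Q = P (Suc n) - smult a (P n)"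
  define w where "w = mult_shift c m"
  have Pn0: "poly (P n) c \<noteq> 0" using assms(3) by auto
  have "poly Q c = 0" using Pn0 by (simp add: Q_def a_def)
  then obtain T where QT: "Q = [:-c,1:] * T" using poly_eq_0_iff_dvd by (metis dvdE)
  have sP: "\<And>k. degree (P k) = k" "\<And>k. lead_coeff (P k) = 1"
    "\<And>k j. j<k \<Longrightarrow> lin m (P k * monom 1 j) = 0" "\<And>k. lin m (P k * monom 1 k) \<noteq> 0"
    using assms(2) unfolding is_SMOP_def by (auto, metis)
  have cQ: "coeff Q (Suc n) = 1" using sP(1,2)[of "Suc n"] sP(1)[of n]
    by (simp add: Q_def coeff_eq_0)
  have "degree Q \<le> Suc n" unfolding Q_def
    by (rule degree_diff_le) (auto simp: sP(1) degree_smult_le intro: order.trans[OF degree_smult_le])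
  then have dQ: "degree Q = Suc n" using cQ by (metis le_antisym le_degree zero_neq_one)
  have T0: "T \<noteq> 0" using dQ QT by auto
  have dm: "degree ([:-c,1:] * T) = degree [:-c,1:] + degree T"
    by (rule degree_mult_eq) (auto simp: T0)
  have d1: "degree [:-c,1::complex:] = 1" by simp
  have dQ': "degree ([:-c,1:] * T) = Suc n" using dQ QT by (simp only:)
  have dT: "degree T = n" using dm d1 dQ' by linarith
  have lm: "lead_coeff ([:-c,1:] * T) = lead_coeff [:-c,1:] * lead_coeff T" by (rule lead_coeff_mult)
  have l1: "lead_coeff [:-c,1::complex:] = 1" by simp
  have "lead_coeff ([:-c,1:] * T) = 1" using cQ dQ QT by (simp only:)
  then have lT: "coeff T n = 1" using lm l1 dT by simp
  have orthT: "\<forall>k<n. lin w (T * monom 1 k) = 0"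
  proof (intro allI impI)
    fix k assume "k < n"
    have "lin w (T * monom 1 k) = lin m (Q * monom 1 k)"
      unfolding w_def lin_shift QT mult.assoc ..
    also have "\<dots> = 0" using sP(3)[of k "Suc n"] sP(3)[of k n] \<open>k < n\<close>
      by (simp add: Q_def left_diff_distrib lin_diff lin_smult)
    finally show "lin w (T * monom 1 k) = 0" .
  qed
  have sPt: "degree (Pt n) = n" "lead_coeff (Pt n) = 1" "\<forall>k<n. lin w (Pt n * monom 1 k) = 0"
    using assms(4) unfolding is_SMOP_def w_def by (auto, metis)
  define S where "S = Pt n - T"
  have cS: "coeff S n = 0" using sPt lT by (simp add: S_def)
  have "degree S \<le> n" unfolding S_def using sPt dT by (intro degree_diff_le) auto
  then have dS: "degree S < n"
    using cS assms(5) by (metis le_neq_implies_less leading_coeff_0_iff degree_0 not_one_le_zero)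
  have "\<forall>k<n. lin w (S * monom 1 k) = 0"
    using sPt(3) orthT by (simp add: S_def left_diff_distrib lin_diff)
  then have "S = 0" using smop_unique[OF assms(4)[folded w_def] dS] by blast
  then have PtT: "Pt n = T" by (simp add: S_def)
  have m0: "m 0 \<noteq> 0" using sP(4)[of 0] lin_bound[of "P 0" 0 m] sP(1)[of 0] by auto
  have key: "Dop m (P (Suc n)) - smult a (Dop m (P n)) = smult (m 0) T + Dop w T"
  proof -
    have "Dop m (P (Suc n)) - smult a (Dop m (P n)) = Dop m Q" by (simp add: Q_def Dop_diff Dop_smult)
    also have "\<dots> = Dop m ([:-c,1:] * T)" by (simp only: QT)
    finally show ?thesis by (simp only: Dop_shift w_def)
  qed
  obtain n' where nn: "n = Suc n'" using assms(5) by (cases n) auto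
  define L where "L = [:-c,1::complex:]"
  have "R m c P n - smult a (R m c P (n - 1))
     = smult (m 0 / w 0) (L * smult (1 / m 0) (Dop m (P (Suc n)) - smult a (Dop m (P n))) - Q)"
    unfolding R_def assoc1_Dop L_def[symmetric] w_def[symmetric] Q_def nn diff_Suc_1
    by (rule alg1)
  also have "\<dots> = smult (m 0 / w 0) (L * smult (1 / m 0) (smult (m 0) T + Dop w T) - L * T)"
    by (simp only: key QT L_def)
  also have "\<dots> = L * assoc1 w Pt (n - 1)"
  proof -
    have "smult (m 0 / w 0) (L * smult (1 / m 0) (smult (m 0) T + Dop w T) - L * T)
       = smult (m 0 / w 0 * (1 / m 0)) (L * Dop w T)" by (rule alg2) (simp add: m0)
    also have "m 0 / w 0 * (1 / m 0) = 1 / w 0" using m0 by simp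
    finally show ?thesis unfolding assoc1_Dop nn using PtT[unfolded nn] by simp
  qed
  finally show ?thesis by (simp add: a_def w_def L_def)
qed

end
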